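(* Let $\alpha>0$, $N\geq 3$, $x:=\frac{\log N}{6\log\log N}$, and let $y\geq x$. Let $\Phi(u)=e^{-u^2/2}$. Define the completely multiplicative function $q$ on $\mathbb{N}$ by $q_p:=1-p/x$ for primes $p\leq x$ and $q_p:=0$ for primes $p>x$, and set $R(t):=\prod_{p\leq x}(1-q_pp^{it})^{-1}=\sum_{n\geq1}q_nn^{it}$. Define the coefficients $a_{k,y}\geq0$ by $\zeta(1+it;y):=\prod_{p\leq y}(1-p^{-1-it})^{-1}=\sum_{k\geq1}a_{k,y}k^{-it}$. Then \[ \sum_{\ell\in\mathbb{Z}}|R(\alpha\ell)|^2\Phi\!\left(\frac{\ell}{N}\right)\geq\sqrt{2\pi}\,N \] and \[ \sum_{\ell\in\mathbb{Z}}\zeta(1+i\alpha\ell;y)\,|R(\alpha\ell)|^2\,\Phi\!\left(\frac{\ell}{N}\right)\;\geq\;\Bigl(\sum_{k\geq1}a_{k,y}q_k\Bigr)\sum_{\ell\in\mathbb{Z}}|R(\alpha\ell)|^2\Phi\!\left(\frac{\ell}{N}\right). \] In particular the left-hand side of the second inequality is a nonnegative real number.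
   Context: Products and sums over $p$ run over primes. Note $0\leq q_p<1$ for $p\leq x$, so all series converge absolutely. *)

theory Defs
  imports "HOL-Analysis.Analysis" "HOL-Computational_Algebra.Primes"
begin

definition xpar :: "real \<Rightarrow> real" where
  "xpar N = ln N / (6 * ln (ln N))"

definition Phi :: "real \<Rightarrow> real" where
  "Phi u = exp (- (u^2) / 2)"

definition q_prime :: "real \<Rightarrow> nat \<Rightarrow> real" where
  "q_prime x p = (if real p \<le> x then 1 - real p / x else 0)"

definition q_coef :: "real \<Rightarrow> nat \<Rightarrow> real" where
  "q_coef x n = (\<Prod>p\<in>prime_factors n. q_prime x p ^ multiplicity p n)"

definition Rfun :: "real \<Rightarrow> real \<Rightarrow> complex" where
  "Rfun x t = (\<Prod>p\<in>{p::nat. prime p \<and> real p \<le> x}.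
       inverse (1 - complex_of_real (q_prime x p) * (of_nat p) powr (\<i> * complex_of_real t)))"

definition zeta_trunc :: "real \<Rightarrow> real \<Rightarrow> complex" where
  "zeta_trunc y t = (\<Prod>p\<in>{p::nat. prime p \<and> real p \<le> y}.
       inverse (1 - (of_nat p) powr (- 1 - \<i> * complex_of_real t)))"

text \<open>Coefficients a_{k,y} of the Dirichlet series
  zeta(1+it;y) = sum_{k>=1} a_{k,y} k^{-it}: a_{k,y} = 1/k if every prime factor
  of k is at most y, and 0 otherwise (a_{0,y} := 0 as a convention for indexing).\<close>
definition a_coef :: "real \<Rightarrow> nat \<Rightarrow> real" where
  "a_coef y k = (if k \<ge> 1 \<and> (\<forall>p\<in>prime_factors k. real p \<le> y) then 1 / real k else 0)"

end

theory Submission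
  imports Defs "HOL-Probability.Probability" "HOL-Library.Nat_Bijection"
begin

lemma summable_int_geom:
  fixes r :: real assumes "0 \<le> r" "r < 1"
  shows "(\<lambda>l::int. r ^ nat \<bar>l\<bar>) summable_on UNIV"
proof -
  have nat: "(\<lambda>n::nat. r ^ n) summable_on UNIV"
    by (rule summable_nonneg_imp_summable_on) (use assms in \<open>auto intro!: summable_geometric\<close>)
  have A: "(\<lambda>l::int. r ^ nat \<bar>l\<bar>) summable_on range int"
    using nat by (subst summable_on_reindex) (auto simp: o_def)
  have B: "(\<lambda>l::int. r ^ nat \<bar>l\<bar>) summable_on range (\<lambda>n::nat. - int n)"
    using nat by (subst summable_on_reindex) (auto simp: o_def inj_on_def)
  have U: "UNIV = range int \<union> range (\<lambda>n::nat. - int n)"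
    by (auto intro: int_cases2)
  show ?thesis using summable_on_union[OF A B] U by simp
qed

lemma summable_int_gauss:
  fixes c a :: real assumes c: "c > 0"
  shows "(\<lambda>l::int. exp (- c * (a + of_int l)^2)) summable_on UNIV"
proof (rule summable_on_comparison_test)
  let ?r = "exp (- c / 2)"
  have r: "0 \<le> ?r" "?r < 1" using c by auto
  show "(\<lambda>l::int. exp (c * a^2) * ?r ^ nat \<bar>l\<bar>) summable_on UNIV"
    by (rule summable_on_cmult_right) (rule summable_int_geom[OF r])
  fix l :: int
  show "0 \<le> exp (- c * (a + of_int l)^2)" by simp
  have sq: "real (nat \<bar>l\<bar>) \<le> (of_int l)^2"
  proof -
    have "\<bar>l\<bar> \<le> l^2"
    proof (cases "l = 0")
      case False
      hence "\<bar>l\<bar> * 1 \<le> \<bar>l\<bar> * \<bar>l\<bar>" by (intro mult_left_mono) auto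
      thus ?thesis by (simp add: power2_eq_square)
    qed simp
    hence "real_of_int \<bar>l\<bar> \<le> real_of_int (l^2)" by linarith
    thus ?thesis by simp
  qed
  have ineq: "(of_int l)^2 \<le> 2 * (a + of_int l)^2 + 2 * a^2"
  proof -
    have h: "0 \<le> (2 * a + of_int l)^2" by simp
    have "2 * (a + of_int l)^2 + 2 * a^2 - (of_int l)^2 = (2 * a + of_int l)^2"
      by (simp add: power2_eq_square algebra_simps)
    with h show ?thesis by linarith
  qed
  have "?r ^ nat \<bar>l\<bar> = exp (- c / 2 * real (nat \<bar>l\<bar>))"
    by (simp add: exp_of_nat_mult[symmetric] mult.commute)
  hence "exp (c * a^2) * ?r ^ nat \<bar>l\<bar> = exp (c * a^2 + (- c / 2 * real (nat \<bar>l\<bar>)))"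
    by (simp only: exp_add)
  moreover have "- c * (a + of_int l)^2 \<le> c * a^2 + (- c / 2 * real (nat \<bar>l\<bar>))"
  proof -
    have "c / 2 * real (nat \<bar>l\<bar>) \<le> c / 2 * (of_int l)^2" using sq c by simp
    also have "\<dots> \<le> c / 2 * (2 * (a + of_int l)^2 + 2 * a^2)" using ineq c by simp
    finally show ?thesis by (simp add: algebra_simps)
  qed
  ultimately show "exp (- c * (a + of_int l)^2) \<le> exp (c * a^2) * ?r ^ nat \<bar>l\<bar>" by simp
qed

definition gg :: "real \<Rightarrow> real \<Rightarrow> real" where "gg s u = exp (- (u^2) / s^2)"

lemma gg_pos: "gg s u > 0" by (simp add: gg_def)

lemma summable_gg: "s > 0 \<Longrightarrow> (\<lambda>l::int. gg s (u + of_int l)) summable_on UNIV"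
  using summable_int_gauss[of "1/s^2" u] by (simp add: gg_def)

lemma summable_Phi: "s > 0 \<Longrightarrow> (\<lambda>l::int. Phi (of_int l / s)) summable_on UNIV"
  using summable_int_gauss[of "1 / (2 * s\<^sup>2)" 0] by (simp add: Phi_def power_divide mult.commute)

lemma gg_prod_integral:
  assumes s: "s > 0"
  shows "has_bochner_integral lborel (\<lambda>u. gg s u * gg s (u + a)) (s * sqrt (pi/2) * Phi (a/s))"
proof -
  have "has_bochner_integral lborel (normal_density (-a/2) (s/2)) 1"
    using has_bochner_integral_integrable[OF integrable_normal_density[of "s/2" "-a/2"]] s by simp
  hence "has_bochner_integral lborel (\<lambda>u. (s * sqrt (pi/2) * Phi (a/s)) * normal_density (-a/2) (s/2) u)
      ((s * sqrt (pi/2) * Phi (a/s)) * 1)"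
    by (rule has_bochner_integral_mult_right)
  moreover have "(s * sqrt (pi/2) * Phi (a/s)) * normal_density (-a/2) (s/2) u = gg s u * gg s (u + a)" for u
  proof -
    have sq: "sqrt (2 * pi * (s/2)^2) = s * sqrt (pi/2)"
    proof -
      have e1: "2 * pi * (s/2)^2 = (pi/2) * s^2" by (simp add: power2_eq_square)
      have "sqrt (2 * pi * (s/2)^2) = sqrt ((pi/2) * s^2)" by (simp only: e1)
      also have "\<dots> = sqrt (pi/2) * sqrt (s^2)" by (rule real_sqrt_mult)
      also have "sqrt (s^2) = s" using s by simp
      finally show ?thesis by (simp only: mult.commute)
    qed
    have pos: "s * sqrt (pi/2) > 0" using s by simp
    have "(s * sqrt (pi/2) * Phi (a/s)) * normal_density (-a/2) (s/2) u
        = Phi (a/s) * exp (- ((u + a / 2)\<^sup>2) / (2 * (s / 2)\<^sup>2))"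
      unfolding normal_density_def sq using pos s by simp
    also have "\<dots> = exp ((- ((a/s)^2)/2) + (- ((u + a / 2)\<^sup>2) / (2 * (s / 2)\<^sup>2)))"
      unfolding Phi_def exp_add[symmetric] by simp
    also have "(- ((a/s)^2)/2) + (- ((u + a / 2)\<^sup>2) / (2 * (s / 2)\<^sup>2)) = (- (u^2)/s^2) + (- ((u+a)^2)/s^2)"
      using s by (simp add: field_simps power2_eq_square)
    also have "exp \<dots> = gg s u * gg s (u + a)" unfolding gg_def exp_add[symmetric] by simp
    finally show ?thesis .
  qed
  ultimately show ?thesis by simp
qed

lemma gg_integral:
  assumes s: "s > 0"
  shows "has_bochner_integral lborel (gg s) (s * sqrt pi)"
proof -
  have "has_bochner_integral lborel (normal_density 0 (s / sqrt 2)) 1"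
    using has_bochner_integral_integrable[OF integrable_normal_density[of "s / sqrt 2" 0]] s by simp
  hence "has_bochner_integral lborel (\<lambda>u. (s * sqrt pi) * normal_density 0 (s / sqrt 2) u) ((s * sqrt pi) * 1)"
    by (rule has_bochner_integral_mult_right)
  moreover have "(s * sqrt pi) * normal_density 0 (s / sqrt 2) u = gg s u" for u
  proof -
    have sq: "sqrt (2 * pi * (s / sqrt 2)^2) = s * sqrt pi"
    proof -
      have "2 * pi * (s / sqrt 2)^2 = pi * s^2" by (simp add: power_divide)
      thus ?thesis using s by (simp add: real_sqrt_mult)
    qed
    have pos: "s * sqrt pi > 0" using s by simp
    show ?thesis unfolding normal_density_def sq gg_def using pos s
      by (simp add: power_divide)
  qed
  ultimately show ?thesis by (simp add: fun_eq_iff)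
qed

lemma integral_infsum_int:
  fixes f :: "int \<Rightarrow> 'b \<Rightarrow> 'a::{banach, second_countable_topology}"
  assumes int[measurable]: "\<And>i. integrable M (f i)"
    and summ: "\<And>x. (\<lambda>i. norm (f i x)) summable_on UNIV"
    and sums: "(\<lambda>i. (\<integral>x. norm (f i x) \<partial>M)) summable_on UNIV"
  shows "integrable M (\<lambda>x. \<Sum>\<^sub>\<infinity>i. f i x)"
    and "(\<integral>x. (\<Sum>\<^sub>\<infinity>i. f i x) \<partial>M) = (\<Sum>\<^sub>\<infinity>i. integral\<^sup>L M (f i))"
proof -
  define h where "h n = f (int_decode n)" for n
  have bij: "bij_betw int_decode UNIV UNIV"
    by (simp add: bij_betw_def inj_int_decode surj_int_decode)
  have hsumm: "summable (\<lambda>n. norm (h n x))" for x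
  proof -
    have "(\<lambda>n. norm (h n x)) summable_on UNIV"
      unfolding h_def using summable_on_reindex_bij_betw[OF bij, of "\<lambda>i. norm (f i x)"] summ by simp
    thus ?thesis by (rule summable_on_imp_summable)
  qed
  have pw: "(\<Sum>\<^sub>\<infinity>i. f i x) = (\<Sum>n. h n x)" for x
  proof -
    have "(\<Sum>\<^sub>\<infinity>i. f i x) = (\<Sum>\<^sub>\<infinity>n. h n x)"
      unfolding h_def using infsum_reindex_bij_betw[OF bij, of "\<lambda>i. f i x"] by simp
    also have "\<dots> = (\<Sum>n. h n x)"
      by (rule infsumI, rule norm_summable_imp_has_sum[OF hsumm])
         (rule summable_sums, rule summable_norm_cancel[OF hsumm])
    finally show ?thesis .
  qed
  have hint: "summable (\<lambda>n. \<integral>x. norm (h n x) \<partial>M)"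
  proof -
    have "(\<lambda>n. \<integral>x. norm (h n x) \<partial>M) summable_on UNIV"
      unfolding h_def using summable_on_reindex_bij_betw[OF bij, of "\<lambda>i. \<integral>x. norm (f i x) \<partial>M"] sums by simp
    thus ?thesis by (rule summable_on_imp_summable)
  qed
  have hi: "integrable M (h n)" for n unfolding h_def by (rule int)
  note R = integrable_suminf[OF hi _ hint] integral_suminf[OF hi _ hint] summable_integral[OF hi _ hint]
  show "integrable M (\<lambda>x. \<Sum>\<^sub>\<infinity>i. f i x)"
    unfolding pw using R(1) hsumm by simp
  have snorm: "summable (\<lambda>n. norm (integral\<^sup>L M (h n)))"
    by (rule summable_comparison_test'[OF hint]) (auto intro: integral_norm_bound)
  have "(\<Sum>\<^sub>\<infinity>i. integral\<^sup>L M (f i)) = (\<Sum>\<^sub>\<infinity>n. integral\<^sup>L M (h n))"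
    unfolding h_def using infsum_reindex_bij_betw[OF bij, of "\<lambda>i. integral\<^sup>L M (f i)"] by simp
  also have "\<dots> = (\<Sum>n. integral\<^sup>L M (h n))"
    by (rule infsumI, rule norm_summable_imp_has_sum[OF snorm])
       (rule summable_sums, rule summable_norm_cancel[OF snorm])
  finally show "(\<integral>x. (\<Sum>\<^sub>\<infinity>i. f i x) \<partial>M) = (\<Sum>\<^sub>\<infinity>i. integral\<^sup>L M (f i))"
    unfolding pw using R(2) hsumm by simp
qed

lemma indicator_unit_shift:
  "indicator {of_int m..<of_int m + 1} (of_int m + u :: real) = (indicator {0..<1} u :: real)"
  by (auto simp: indicator_def)

lemma indicator_unit_floor:
  "indicator {of_int m..<of_int m + 1} (v::real) = (if m = \<lfloor>v\<rfloor> then 1 else (0::real))"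
proof -
  have "(of_int m \<le> v \<and> v < of_int m + 1) \<longleftrightarrow> m = \<lfloor>v\<rfloor>"
    using floor_eq_iff[of v m] by auto
  thus ?thesis by (auto simp: indicator_def)
qed

lemma integral_shift_unit:
  fixes H :: "real \<Rightarrow> 'a::{banach, second_countable_topology}"
  shows "(\<integral>u. indicator {0..<1} u *\<^sub>R H (u + of_int m) \<partial>lborel)
       = (\<integral>v. indicator {of_int m..<of_int m + 1} v *\<^sub>R H v \<partial>lborel)"
proof -
  define F where "F v = indicator {of_int m..<of_int m + 1} v *\<^sub>R H v" for v
  have "integral\<^sup>L lborel F = (\<integral>u. F (of_int m + 1 * u) \<partial>lborel)"
    using lborel_integral_real_affine[of 1 F "of_int m"] by simp
  also have "\<dots> = (\<integral>u. indicator {0..<1} u *\<^sub>R H (u + of_int m) \<partial>lborel)"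
    unfolding F_def mult_1 indicator_unit_shift by (simp add: add.commute)
  finally show ?thesis unfolding F_def by simp
qed

lemma fold_integral:
  fixes H :: "real \<Rightarrow> 'a::{banach, second_countable_topology}"
  assumes H: "integrable lborel H"
    and summ: "\<And>u. (\<lambda>m::int. norm (H (u + of_int m))) summable_on UNIV"
  shows "integrable lborel (\<lambda>u. indicator {0..<1} u *\<^sub>R (\<Sum>\<^sub>\<infinity>m::int. H (u + of_int m)))"
    and "(\<integral>u. indicator {0..<1} u *\<^sub>R (\<Sum>\<^sub>\<infinity>m::int. H (u + of_int m)) \<partial>lborel) = integral\<^sup>L lborel H"
proof -
  have Hm[measurable]: "H \<in> borel_measurable borel" using H by auto
  define k where "k m v = indicator {of_int m..<of_int m + 1} v *\<^sub>R H v" for m :: int and v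
  define f where "f m u = indicator {0..<1} u *\<^sub>R H (u + of_int m)" for m :: int and u
  have kint: "integrable lborel (k m)" for m
    unfolding k_def by (rule integrable_mult_indicator) (auto intro: H)
  have Hshift: "integrable lborel (\<lambda>u. H (u + of_int m))" for m
    using lborel_integrable_real_affine[OF H, of 1 "of_int m"] by (simp add: add.commute)
  have fint: "integrable lborel (f m)" for m
    unfolding f_def by (rule integrable_mult_indicator) (auto intro: Hshift)
  have nk: "(\<integral>v. norm (k m v) \<partial>lborel) = (\<integral>u. norm (f m u) \<partial>lborel)" for m
  proof -
    have "(\<integral>u. norm (f m u) \<partial>lborel) = (\<integral>u. indicator {0..<1} u *\<^sub>R norm (H (u + of_int m)) \<partial>lborel)"
      unfolding f_def by (intro Bochner_Integration.integral_cong) (auto simp: indicator_def)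
    also have "\<dots> = (\<integral>v. indicator {of_int m..<of_int m + 1} v *\<^sub>R norm (H v) \<partial>lborel)"
      by (rule integral_shift_unit)
    also have "\<dots> = (\<integral>v. norm (k m v) \<partial>lborel)"
      unfolding k_def by (intro Bochner_Integration.integral_cong) (auto simp: indicator_def)
    finally show ?thesis by simp
  qed
  have ksum: "(\<lambda>m. \<integral>v. norm (k m v) \<partial>lborel) summable_on UNIV"
  proof (rule nonneg_bdd_above_summable_on)
    show "0 \<le> (\<integral>v. norm (k m v) \<partial>lborel)" for m by simp
    show "bdd_above (sum (\<lambda>m. \<integral>v. norm (k m v) \<partial>lborel) ` {F. F \<subseteq> UNIV \<and> finite F})"
    proof (rule bdd_aboveI2)
      fix F :: "int set" assume "F \<in> {F. F \<subseteq> UNIV \<and> finite F}"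
      hence F: "finite F" by simp
      have "(\<Sum>m\<in>F. \<integral>v. norm (k m v) \<partial>lborel) = (\<integral>v. (\<Sum>m\<in>F. norm (k m v)) \<partial>lborel)"
        by (rule Bochner_Integration.integral_sum[symmetric]) (intro integrable_norm kint)
      also have "\<dots> \<le> (\<integral>v. norm (H v) \<partial>lborel)"
      proof (rule Bochner_Integration.integral_mono)
        show "integrable lborel (\<lambda>v. \<Sum>m\<in>F. norm (k m v))" by (intro Bochner_Integration.integrable_sum integrable_norm kint)
        show "integrable lborel (\<lambda>v. norm (H v))" using H by auto
        fix v
        have "(\<Sum>m\<in>F. norm (k m v)) = (\<Sum>m\<in>F. if m = \<lfloor>v\<rfloor> then norm (H v) else 0)"
          unfolding k_def by (intro sum.cong) (auto simp: indicator_unit_floor)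
        also have "\<dots> \<le> norm (H v)" using F by (simp add: sum.delta)
        finally show "(\<Sum>m\<in>F. norm (k m v)) \<le> norm (H v)" .
      qed
      finally show "(\<Sum>m\<in>F. \<integral>v. norm (k m v) \<partial>lborel) \<le> (\<integral>v. norm (H v) \<partial>lborel)" .
    qed
  qed
  have fsum: "(\<lambda>m. \<integral>u. norm (f m u) \<partial>lborel) summable_on UNIV"
    using ksum by (simp add: nk)
  have fpw: "(\<lambda>m. norm (f m u)) summable_on UNIV" for u
  proof (cases "u \<in> {0..<1}")
    case True thus ?thesis using summ[of u] by (simp add: f_def)
  next
    case False thus ?thesis by (simp add: f_def)
  qed
  have single: "(\<Sum>\<^sub>\<infinity>m::int. if m = a then c else 0) = c" for a and c :: "'c::{comm_monoid_add,t2_space}"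
  proof -
    have "(\<Sum>\<^sub>\<infinity>m::int. if m = a then c else 0) = (\<Sum>\<^sub>\<infinity>m\<in>{a}. if m = a then c else 0)"
      by (rule infsum_cong_neutral) auto
    thus ?thesis by simp
  qed
  have kpw: "(\<lambda>m. norm (k m v)) summable_on UNIV" for v
  proof -
    have "(\<lambda>m. norm (k m v)) = (\<lambda>m. if m = \<lfloor>v\<rfloor> then norm (H v) else 0)"
      unfolding k_def by (auto simp: indicator_unit_floor)
    moreover have "(\<lambda>m::int. if m = \<lfloor>v\<rfloor> then norm (H v) else 0) summable_on UNIV"
      by (rule summable_on_cong_neutral[where S="{\<lfloor>v\<rfloor>}", THEN iffD1]) auto
    ultimately show ?thesis by simp
  qed
  have kval: "(\<Sum>\<^sub>\<infinity>m. k m v) = H v" for v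
  proof -
    have "(\<lambda>m. k m v) = (\<lambda>m. if m = \<lfloor>v\<rfloor> then H v else 0)"
      unfolding k_def by (auto simp: indicator_unit_floor)
    thus ?thesis by (simp add: single)
  qed
  have fval: "(\<Sum>\<^sub>\<infinity>m. f m u) = indicator {0..<1} u *\<^sub>R (\<Sum>\<^sub>\<infinity>m::int. H (u + of_int m))" for u
    unfolding f_def by (cases "u \<in> {0..<1}") auto
  note F = integral_infsum_int[of lborel f, OF fint fpw fsum]
  note K = integral_infsum_int[of lborel k, OF kint kpw ksum]
  show "integrable lborel (\<lambda>u. indicator {0..<1} u *\<^sub>R (\<Sum>\<^sub>\<infinity>m::int. H (u + of_int m)))"
    using F(1) by (simp add: fval)
  have fk: "integral\<^sup>L lborel (f m) = integral\<^sup>L lborel (k m)" for m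
    unfolding f_def k_def by (rule integral_shift_unit)
  have "(\<integral>u. indicator {0..<1} u *\<^sub>R (\<Sum>\<^sub>\<infinity>m::int. H (u + of_int m)) \<partial>lborel) = (\<Sum>\<^sub>\<infinity>m. integral\<^sup>L lborel (f m))"
    using F(2) by (simp add: fval)
  also have "\<dots> = (\<Sum>\<^sub>\<infinity>m. integral\<^sup>L lborel (k m))" by (simp add: fk)
  also have "\<dots> = integral\<^sup>L lborel H" using K(2) by (simp add: kval)
  finally show "(\<integral>u. indicator {0..<1} u *\<^sub>R (\<Sum>\<^sub>\<infinity>m::int. H (u + of_int m)) \<partial>lborel) = integral\<^sup>L lborel H" .
qed

lemma gg_prod_int: "s > 0 \<Longrightarrow> integrable lborel (\<lambda>u. gg s u * gg s (u + a))"
  by (rule integrable.intros[OF gg_prod_integral])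
lemma gg_prod_int_eq: "s > 0 \<Longrightarrow> (\<integral>u. gg s u * gg s (u + a) \<partial>lborel) = s * sqrt (pi/2) * Phi (a/s)"
  by (rule has_bochner_integral_integral_eq[OF gg_prod_integral])

lemma theta_nonneg:
  assumes s: "s > 0"
  shows "\<exists>r\<ge>0. (\<Sum>\<^sub>\<infinity>l::int. complex_of_real (Phi (of_int l / s)) * cis (of_int l * \<theta>)) = complex_of_real r"
proof -
  define C where "C = s * sqrt (pi/2)"
  have Cpos: "C > 0" using s by (simp add: C_def)
  define T where "T = (\<Sum>\<^sub>\<infinity>l::int. complex_of_real (Phi (of_int l / s)) * cis (of_int l * \<theta>))"
  define Q where "Q u = (\<Sum>\<^sub>\<infinity>l::int. complex_of_real (gg s (u + of_int l)) * cis (of_int l * \<theta>))" for u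
  define f where "f l u = complex_of_real (gg s u * gg s (u + of_int l)) * cis (of_int l * \<theta>)" for l :: int and u
  have fint: "integrable lborel (f l)" for l
    unfolding f_def by (intro integrable_mult_left integrable_of_real gg_prod_int s)
  have nf: "norm (f l u) = gg s u * gg s (u + of_int l)" for l u
    unfolding f_def by (simp add: norm_mult abs_mult gg_def)
  have fpw: "(\<lambda>l. norm (f l u)) summable_on UNIV" for u
    unfolding nf by (intro summable_on_cmult_right summable_gg s)
  have fsum: "(\<lambda>l. \<integral>u. norm (f l u) \<partial>lborel) summable_on UNIV"
    unfolding nf using s by (simp add: gg_prod_int_eq) (intro summable_on_cmult_right summable_Phi s)
  note I = integral_infsum_int[of lborel f, OF fint fpw fsum]
  have pw: "(\<Sum>\<^sub>\<infinity>l. f l u) = complex_of_real (gg s u) * Q u" for u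
    unfolding f_def Q_def by (subst infsum_cmult_right'[symmetric]) (simp add: mult.assoc)
  have intf: "integral\<^sup>L lborel (f l) = complex_of_real C * (complex_of_real (Phi (of_int l / s)) * cis (of_int l * \<theta>))" for l
  proof -
    have "f l = (\<lambda>u. complex_of_real (gg s u * gg s (u + of_int l)) * cis (of_int l * \<theta>))"
      by (simp add: fun_eq_iff f_def)
    hence "integral\<^sup>L lborel (f l) = (\<integral>u. complex_of_real (gg s u * gg s (u + of_int l)) \<partial>lborel) * cis (of_int l * \<theta>)"
      by (simp only: integral_mult_left_zero)
    also have "\<dots> = complex_of_real (C * Phi (of_int l / s)) * cis (of_int l * \<theta>)"
      by (simp only: integral_complex_of_real gg_prod_int_eq[OF s] C_def)
    finally show ?thesis by simp
  qed
  define H where "H u = complex_of_real (gg s u) * Q u" for u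
  have Hint: "integrable lborel H" using I(1) by (simp add: pw H_def[abs_def])
  have HI: "integral\<^sup>L lborel H = complex_of_real C * T"
    using I(2) by (simp add: pw H_def[abs_def] intf T_def infsum_cmult_right')
  have Qshift: "Q (u + of_int m) = cis (- (of_int m * \<theta>)) * Q u" for u m
  proof -
    have bij: "bij_betw (\<lambda>l. l + m) UNIV (UNIV::int set)"
      by (rule bij_betwI[where g="\<lambda>k. k - m"]) auto
    have "Q (u + of_int m) = (\<Sum>\<^sub>\<infinity>l::int. (\<lambda>k. complex_of_real (gg s (u + of_int k)) * cis (of_int (k - m) * \<theta>)) (l + m))"
      unfolding Q_def by (intro infsum_cong) (simp add: ac_simps)
    also have "\<dots> = (\<Sum>\<^sub>\<infinity>k::int. complex_of_real (gg s (u + of_int k)) * cis (of_int (k - m) * \<theta>))"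
      by (rule infsum_reindex_bij_betw[OF bij])
    also have "\<dots> = (\<Sum>\<^sub>\<infinity>k::int. cis (- (of_int m * \<theta>)) * (complex_of_real (gg s (u + of_int k)) * cis (of_int k * \<theta>)))"
      by (intro infsum_cong) (simp add: cis_mult algebra_simps)
    also have "\<dots> = cis (- (of_int m * \<theta>)) * Q u"
      unfolding Q_def by (rule infsum_cmult_right')
    finally show ?thesis .
  qed
  have nH: "norm (H (u + of_int m)) = gg s (u + of_int m) * norm (Q u)" for u m
    unfolding H_def Qshift by (simp add: norm_mult gg_def)
  have Hpw: "(\<lambda>m. norm (H (u + of_int m))) summable_on UNIV" for u
    unfolding nH by (intro summable_on_cmult_left summable_gg s)
  have cnjQ: "cnj (Q u) = (\<Sum>\<^sub>\<infinity>m::int. complex_of_real (gg s (u + of_int m)) * cis (- (of_int m * \<theta>)))" for u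
    unfolding Q_def infsum_cnj[symmetric] by (intro infsum_cong) (simp add: cis_cnj)
  have Hsum: "(\<Sum>\<^sub>\<infinity>m::int. H (u + of_int m)) = complex_of_real ((norm (Q u))^2)" for u
  proof -
    have "(\<Sum>\<^sub>\<infinity>m::int. H (u + of_int m))
        = (\<Sum>\<^sub>\<infinity>m::int. (complex_of_real (gg s (u + of_int m)) * cis (- (of_int m * \<theta>))) * Q u)"
      unfolding H_def Qshift by (intro infsum_cong) (simp add: mult.assoc)
    also have "\<dots> = cnj (Q u) * Q u" unfolding cnjQ by (rule infsum_cmult_left')
    also have "\<dots> = complex_of_real ((norm (Q u))^2)" by (simp only: complex_norm_square mult.commute)
    finally show ?thesis .
  qed
  note Fo = fold_integral[OF Hint Hpw]
  have "(\<integral>u. indicator {0..<1} u *\<^sub>R (\<Sum>\<^sub>\<infinity>m::int. H (u + of_int m)) \<partial>lborel)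
      = (\<integral>u. complex_of_real (indicator {0..<1} u * (norm (Q u))^2) \<partial>lborel)"
    unfolding Hsum by (intro Bochner_Integration.integral_cong) (auto simp: indicator_def)
  also have "\<dots> = complex_of_real (\<integral>u. indicator {0..<1} u * (norm (Q u))^2 \<partial>lborel)" by (rule integral_complex_of_real)
  finally have "complex_of_real C * T = complex_of_real (\<integral>u. indicator {0..<1} u * (norm (Q u))^2 \<partial>lborel)"
    using Fo(2) HI by simp
  hence "T = complex_of_real ((\<integral>u. indicator {0..<1} u * (norm (Q u))^2 \<partial>lborel) / C)"
    using Cpos by (simp add: field_simps)
  moreover have "(\<integral>u. indicator {0..<1} u * (norm (Q u))^2 \<partial>lborel) / C \<ge> 0"
    using Cpos by (intro divide_nonneg_pos Bochner_Integration.integral_nonneg) auto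
  ultimately show ?thesis unfolding T_def by blast
qed

lemma theta_zero:
  assumes s: "s > 0"
  shows "(\<Sum>\<^sub>\<infinity>l::int. Phi (of_int l / s)) \<ge> sqrt (2 * pi) * s"
proof -
  define C where "C = s * sqrt (pi/2)"
  have Cpos: "C > 0" using s by (simp add: C_def)
  define S where "S u = (\<Sum>\<^sub>\<infinity>l::int. gg s (u + of_int l))" for u
  have Snn: "S u \<ge> 0" for u unfolding S_def by (intro infsum_nonneg) (simp add: gg_def)
  define f where "f l u = gg s u * gg s (u + of_int l)" for l :: int and u
  have fint: "integrable lborel (f l)" for l
    unfolding f_def by (intro gg_prod_int s)
  have nf: "norm (f l u) = gg s u * gg s (u + of_int l)" for l u
    unfolding f_def by (simp add: gg_def)
  have fpw: "(\<lambda>l. norm (f l u)) summable_on UNIV" for u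
    unfolding nf by (intro summable_on_cmult_right summable_gg s)
  have fsum: "(\<lambda>l. \<integral>u. norm (f l u) \<partial>lborel) summable_on UNIV"
    unfolding nf using s by (simp add: gg_prod_int_eq) (intro summable_on_cmult_right summable_Phi s)
  note I = integral_infsum_int[of lborel f, OF fint fpw fsum]
  define H where "H u = gg s u * S u" for u
  have pw: "(\<Sum>\<^sub>\<infinity>l. f l u) = H u" for u
    unfolding f_def H_def S_def by (rule infsum_cmult_right')
  have Hint: "integrable lborel H" using I(1) by (simp add: pw H_def[abs_def])
  have intf: "integral\<^sup>L lborel (f l) = C * Phi (of_int l / s)" for l
  proof -
    have "f l = (\<lambda>u. gg s u * gg s (u + of_int l))" by (simp add: fun_eq_iff f_def)
    thus ?thesis by (simp add: gg_prod_int_eq[OF s] C_def)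
  qed
  have HI: "integral\<^sup>L lborel H = C * (\<Sum>\<^sub>\<infinity>l::int. Phi (of_int l / s))"
    using I(2) by (simp add: pw intf infsum_cmult_right')
  have Sshift: "S (u + of_int m) = S u" for u m
  proof -
    have bij: "bij_betw (\<lambda>l. l + m) UNIV (UNIV::int set)"
      by (rule bij_betwI[where g="\<lambda>k. k - m"]) auto
    have "S (u + of_int m) = (\<Sum>\<^sub>\<infinity>l::int. (\<lambda>k. gg s (u + of_int k)) (l + m))"
      unfolding S_def by (intro infsum_cong) (simp add: ac_simps)
    also have "\<dots> = S u" unfolding S_def by (rule infsum_reindex_bij_betw[OF bij])
    finally show ?thesis .
  qed
  have Hpw: "(\<lambda>m. norm (H (u + of_int m))) summable_on UNIV" for u
  proof -
    have "(\<lambda>m. norm (H (u + of_int m))) = (\<lambda>m. gg s (u + of_int m) * S u)"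
      unfolding H_def Sshift using Snn by (auto simp: gg_def abs_mult)
    thus ?thesis by (simp add: summable_on_cmult_left summable_gg s)
  qed
  have Hsum: "(\<Sum>\<^sub>\<infinity>m::int. H (u + of_int m)) = S u * S u" for u
    unfolding H_def Sshift by (subst infsum_cmult_left') (simp add: S_def)
  note Fo = fold_integral[OF Hint Hpw]
  have gint: "integrable lborel (gg s)" by (rule integrable.intros[OF gg_integral[OF s]])
  have gpw: "(\<lambda>m. norm (gg s (u + of_int m))) summable_on UNIV" for u
    using summable_gg[OF s, of u] by (simp add: gg_def)
  note Fg = fold_integral[OF gint gpw]
  have Fg1: "integrable lborel (\<lambda>u. indicator {0..<1} u * S u)" using Fg(1) by (simp add: S_def)
  have Fg2: "(\<integral>u. indicator {0..<1} u * S u \<partial>lborel) = s * sqrt pi"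
    using Fg(2) gg_integral[OF s] by (simp add: S_def has_bochner_integral_integral_eq)
  have Fo1: "integrable lborel (\<lambda>u. indicator {0..<1} u * (S u * S u))" using Fo(1) by (simp add: Hsum)
  have Fo2: "(\<integral>u. indicator {0..<1} u * (S u * S u) \<partial>lborel) = C * (\<Sum>\<^sub>\<infinity>l::int. Phi (of_int l / s))"
    using Fo(2) HI by (simp add: Hsum)
  define a where "a = s * sqrt pi"
  have iind: "integrable lborel (indicator {0..<1::real} :: real \<Rightarrow> real)" by simp
  have ind1: "(\<integral>u. indicator {0..<1::real} u \<partial>lborel) = (1::real)" by simp
  have "0 \<le> (\<integral>u. indicator {0..<1} u * (S u - a)^2 \<partial>lborel)"
    by (intro Bochner_Integration.integral_nonneg) auto
  also have "(\<integral>u. indicator {0..<1} u * (S u - a)^2 \<partial>lborel)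
      = (\<integral>u. indicator {0..<1} u * (S u * S u) - 2 * a * (indicator {0..<1} u * S u) + a^2 * indicator {0..<1} u \<partial>lborel)"
    by (intro Bochner_Integration.integral_cong) (auto simp: power2_eq_square algebra_simps)
  also have "\<dots> = C * (\<Sum>\<^sub>\<infinity>l::int. Phi (of_int l / s)) - 2 * a * (s * sqrt pi) + a^2"
    using Fo1 Fg1 iind Fo2 Fg2 ind1 by (simp add: integral_add integral_diff)
  finally have key: "a^2 \<le> C * (\<Sum>\<^sub>\<infinity>l::int. Phi (of_int l / s))" by (simp add: a_def[symmetric] power2_eq_square)
  have "C * (sqrt (2 * pi) * s) = a^2"
  proof -
    have "sqrt (pi/2) * sqrt (2 * pi) = pi"
      by (simp add: real_sqrt_mult[symmetric])
    thus ?thesis unfolding C_def a_def by (simp add: power2_eq_square algebra_simps)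
  qed
  with key have "C * (sqrt (2 * pi) * s) \<le> C * (\<Sum>\<^sub>\<infinity>l::int. Phi (of_int l / s))" by simp
  thus ?thesis using Cpos by simp
qed

definition Th :: "real \<Rightarrow> real \<Rightarrow> complex" where
  "Th s \<theta> = (\<Sum>\<^sub>\<infinity>l::int. complex_of_real (Phi (of_int l / s)) * cis (of_int l * \<theta>))"

lemma Phi_nonneg: "Phi u \<ge> 0" by (simp add: Phi_def)

lemma summable_on_times_nonneg:
  fixes f :: "'a \<Rightarrow> real" and g :: "'b \<Rightarrow> real"
  assumes fn: "\<And>a. a \<in> A \<Longrightarrow> f a \<ge> 0" and gn: "\<And>b. b \<in> B \<Longrightarrow> g b \<ge> 0"
    and fs: "f summable_on A" and gs: "g summable_on B"
  shows "(\<lambda>(a,b). f a * g b) summable_on A \<times> B"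
proof (rule nonneg_bdd_above_summable_on)
  show "\<And>x. x \<in> A \<times> B \<Longrightarrow> 0 \<le> (case x of (a, b) \<Rightarrow> f a * g b)"
    using fn gn by auto
  show "bdd_above (sum (\<lambda>(a,b). f a * g b) ` {F. F \<subseteq> A \<times> B \<and> finite F})"
  proof (rule bdd_aboveI2)
    fix F assume "F \<in> {F. F \<subseteq> A \<times> B \<and> finite F}"
    hence F: "F \<subseteq> A \<times> B" "finite F" by auto
    have sub: "F \<subseteq> fst ` F \<times> snd ` F" by force
    have fa: "fst ` F \<subseteq> A" "snd ` F \<subseteq> B" using F by auto
    have "sum (\<lambda>(a,b). f a * g b) F \<le> sum (\<lambda>(a,b). f a * g b) (fst ` F \<times> snd ` F)"
      by (rule sum_mono2[OF _ sub]) (use F fa fn gn in \<open>auto intro!: mult_nonneg_nonneg\<close>)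
    also have "\<dots> = (\<Sum>a\<in>fst ` F. f a) * (\<Sum>b\<in>snd ` F. g b)"
      by (simp add: sum_product sum.cartesian_product)
    also have "\<dots> \<le> infsum f A * infsum g B"
    proof (rule mult_mono)
      show "(\<Sum>a\<in>fst ` F. f a) \<le> infsum f A"
        by (rule finite_sum_le_infsum) (use fs F fa fn in auto)
      show "(\<Sum>b\<in>snd ` F. g b) \<le> infsum g B"
        by (rule finite_sum_le_infsum) (use gs F fa gn in auto)
      show "0 \<le> infsum f A" using fn by (intro infsum_nonneg) auto
      show "0 \<le> (\<Sum>b\<in>snd ` F. g b)" using fa gn by (intro sum_nonneg) auto
    qed
    finally show "sum (\<lambda>(a,b). f a * g b) F \<le> infsum f A * infsum g B" .
  qed
qed

lemma infsum_times_Sigma: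
  fixes f :: "'a \<Rightarrow> 'c::{banach, real_normed_field}" and g :: "'b \<Rightarrow> 'c"
  assumes "(\<lambda>(a,b). f a * g b) summable_on A \<times> B"
  shows "(\<Sum>\<^sub>\<infinity>(a,b)\<in>A \<times> B. f a * g b) = infsum f A * infsum g B"
proof -
  have "(\<Sum>\<^sub>\<infinity>(a,b)\<in>A \<times> B. f a * g b) = (\<Sum>\<^sub>\<infinity>a\<in>A. \<Sum>\<^sub>\<infinity>b\<in>B. f a * g b)"
    using infsum_Sigma'_banach[of "\<lambda>a b. f a * g b" A "\<lambda>_. B"] assms by simp
  also have "\<dots> = (\<Sum>\<^sub>\<infinity>a\<in>A. f a * infsum g B)" by (simp add: infsum_cmult_right')
  also have "\<dots> = infsum f A * infsum g B" by (simp add: infsum_cmult_left')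
  finally show ?thesis .
qed

lemma summable_prod_PiE_nonneg:
  fixes f :: "'a \<Rightarrow> 'b \<Rightarrow> real"
  assumes "finite A" "\<And>x y. x \<in> A \<Longrightarrow> y \<in> B x \<Longrightarrow> f x y \<ge> 0"
    "\<And>x. x \<in> A \<Longrightarrow> f x summable_on B x"
  shows "(\<lambda>g. \<Prod>x\<in>A. f x (g x)) summable_on PiE A B"
  using assms
proof (induction A rule: finite_induct)
  case empty
  thus ?case by simp
next
  case (insert x F)
  have pi: "Pi\<^sub>E (insert x F) B = (\<lambda>(g,y). g(x:=y)) ` (Pi\<^sub>E F B \<times> B x)"
    unfolding PiE_insert_eq
    by (subst swap_product [symmetric]) (simp add: image_image case_prod_unfold)
  have inj: "inj_on (\<lambda>(g, y). g(x := y)) (Pi\<^sub>E F B \<times> B x)"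
    using \<open>x \<notin> F\<close> by (rule inj_combinator')
  have IH: "(\<lambda>g. \<Prod>x\<in>F. f x (g x)) summable_on PiE F B"
    using insert by auto
  have prod: "(\<lambda>(g,y). (\<Prod>z\<in>F. f z (g z)) * f x y) summable_on (Pi\<^sub>E F B \<times> B x)"
    by (rule summable_on_times_nonneg[OF _ _ IH])
       (use insert.prems in \<open>auto intro!: prod_nonneg simp: PiE_iff\<close>)
  have eq: "((\<lambda>g. \<Prod>x\<in>insert x F. f x (g x)) \<circ> (\<lambda>(g,y). g(x:=y))) (g,y) = (\<Prod>z\<in>F. f z (g z)) * f x y"
    if "(g,y) \<in> Pi\<^sub>E F B \<times> B x" for g y
  proof -
    have "(\<Prod>z\<in>F. f z ((g(x := y)) z)) = (\<Prod>z\<in>F. f z (g z))"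
      using insert.hyps by (intro prod.cong) auto
    thus ?thesis using insert.hyps by (simp add: mult.commute)
  qed
  have "((\<lambda>g. \<Prod>x\<in>insert x F. f x (g x)) \<circ> (\<lambda>(g,y). g(x:=y))) summable_on (Pi\<^sub>E F B \<times> B x)"
    using prod by (rule summable_on_cong[THEN iffD1, rotated]) (use eq in auto)
  hence "(\<lambda>g. \<Prod>x\<in>insert x F. f x (g x)) summable_on ((\<lambda>(g,y). g(x:=y)) ` (Pi\<^sub>E F B \<times> B x))"
    using summable_on_reindex[OF inj] by blast
  thus ?case using pi by simp
qed

lemma cis_sum_prod: "finite A \<Longrightarrow> (\<Prod>x\<in>A. cis (f x)) = cis (\<Sum>x\<in>A. f x)"
  by (simp add: cis_conv_exp exp_sum[symmetric] sum_distrib_left)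

lemma Th_bound:
  assumes s: "s > 0" shows "norm (Th s \<theta>) \<le> (\<Sum>\<^sub>\<infinity>l::int. Phi (of_int l / s))"
proof -
  have eq: "(\<lambda>l::int. norm (complex_of_real (Phi (of_int l / s)) * cis (of_int l * \<theta>))) = (\<lambda>l. Phi (of_int l / s))"
    by (simp add: norm_mult Phi_nonneg)
  have "(\<lambda>l::int. norm (complex_of_real (Phi (of_int l / s)) * cis (of_int l * \<theta>))) summable_on UNIV"
    unfolding eq by (rule summable_Phi[OF s])
  from norm_infsum_bound[OF this] show ?thesis unfolding Th_def eq .
qed

lemma functional:
  fixes c lam :: "'j \<Rightarrow> real"
  assumes s: "s > 0" and cnn: "\<And>j. j \<in> J \<Longrightarrow> c j \<ge> 0" and cs: "c summable_on J"
  shows "(\<lambda>l::int. (\<Sum>\<^sub>\<infinity>j\<in>J. complex_of_real (c j) * cis (\<alpha> * of_int l * lam j)) * complex_of_real (Phi (of_int l / s))) summable_on UNIV"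
    and "(\<Sum>\<^sub>\<infinity>l::int. (\<Sum>\<^sub>\<infinity>j\<in>J. complex_of_real (c j) * cis (\<alpha> * of_int l * lam j)) * complex_of_real (Phi (of_int l / s)))
         = (\<Sum>\<^sub>\<infinity>j\<in>J. complex_of_real (c j) * Th s (\<alpha> * lam j))"
proof -
  define G where "G l j = complex_of_real (c j) * cis (\<alpha> * of_int l * lam j) * complex_of_real (Phi (of_int l / s))" for l :: int and j
  have nG: "norm (G l j) = Phi (of_int l / s) * c j" if "j \<in> J" for l j
    using cnn[OF that] unfolding G_def by (simp add: norm_mult Phi_nonneg)
  have ns: "(\<lambda>(l,j). Phi (of_int l / s) * c j) summable_on (UNIV \<times> J)"
    by (rule summable_on_times_nonneg) (use cnn cs summable_Phi[OF s] Phi_nonneg in auto)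
  have sumG: "(\<lambda>(l,j). G l j) summable_on (UNIV \<times> J)"
  proof (rule abs_summable_summable)
    show "(\<lambda>x. norm (case x of (l, j) \<Rightarrow> G l j)) summable_on UNIV \<times> J"
      using ns by (rule summable_on_cong[THEN iffD1, rotated]) (auto simp: nG)
  qed
  have inner: "infsum (G l) J = (\<Sum>\<^sub>\<infinity>j\<in>J. complex_of_real (c j) * cis (\<alpha> * of_int l * lam j)) * complex_of_real (Phi (of_int l / s))" for l
    unfolding G_def by (rule infsum_cmult_left')
  show "(\<lambda>l::int. (\<Sum>\<^sub>\<infinity>j\<in>J. complex_of_real (c j) * cis (\<alpha> * of_int l * lam j)) * complex_of_real (Phi (of_int l / s))) summable_on UNIV"
    using summable_on_Sigma_banach[of G UNIV "\<lambda>_. J"] sumG by (simp add: inner)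
  have "(\<Sum>\<^sub>\<infinity>l::int. (\<Sum>\<^sub>\<infinity>j\<in>J. complex_of_real (c j) * cis (\<alpha> * of_int l * lam j)) * complex_of_real (Phi (of_int l / s)))
      = (\<Sum>\<^sub>\<infinity>l::int. \<Sum>\<^sub>\<infinity>j\<in>J. G l j)" by (simp add: inner)
  also have "\<dots> = (\<Sum>\<^sub>\<infinity>j\<in>J. \<Sum>\<^sub>\<infinity>l::int. G l j)"
    by (rule infsum_swap_banach) (use sumG in simp)
  also have "\<dots> = (\<Sum>\<^sub>\<infinity>j\<in>J. complex_of_real (c j) * Th s (\<alpha> * lam j))"
  proof (rule infsum_cong)
    fix j
    have "(\<Sum>\<^sub>\<infinity>l::int. G l j) = (\<Sum>\<^sub>\<infinity>l::int. complex_of_real (c j) * (complex_of_real (Phi (of_int l / s)) * cis (of_int l * (\<alpha> * lam j))))"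
      unfolding G_def by (intro infsum_cong) (simp add: mult_ac)
    also have "\<dots> = complex_of_real (c j) * Th s (\<alpha> * lam j)"
      unfolding Th_def by (rule infsum_cmult_right')
    finally show "(\<Sum>\<^sub>\<infinity>l::int. G l j) = complex_of_real (c j) * Th s (\<alpha> * lam j)" .
  qed
  finally show "(\<Sum>\<^sub>\<infinity>l::int. (\<Sum>\<^sub>\<infinity>j\<in>J. complex_of_real (c j) * cis (\<alpha> * of_int l * lam j)) * complex_of_real (Phi (of_int l / s)))
         = (\<Sum>\<^sub>\<infinity>j\<in>J. complex_of_real (c j) * Th s (\<alpha> * lam j))" .
qed

definition PP :: "real \<Rightarrow> nat set" where "PP x = {p::nat. prime p \<and> real p \<le> x}"
definition VV :: "real \<Rightarrow> (nat \<Rightarrow> nat) set" where "VV x = PiE (PP x) (\<lambda>_. UNIV)"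
definition wt :: "real \<Rightarrow> (nat \<Rightarrow> nat) \<Rightarrow> real" where "wt x e = (\<Prod>p\<in>PP x. q_prime x p ^ e p)"
definition wz :: "real \<Rightarrow> (nat \<Rightarrow> nat) \<Rightarrow> real" where "wz y f = (\<Prod>p\<in>PP y. (1 / real p) ^ f p)"
definition lam :: "real \<Rightarrow> (nat \<Rightarrow> nat) \<Rightarrow> real" where "lam x e = (\<Sum>p\<in>PP x. real (e p) * ln (real p))"

lemma finite_PP: "finite (PP x)"
proof (rule finite_subset[of _ "{..nat \<lfloor>x\<rfloor>}"])
  show "PP x \<subseteq> {..nat \<lfloor>x\<rfloor>}"
    by (auto simp: PP_def le_nat_floor)
qed simp

lemma PP_pos: "p \<in> PP x \<Longrightarrow> p > 0"
  by (auto simp: PP_def prime_gt_0_nat)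

lemma q_range: assumes "p \<in> PP x" shows "0 \<le> q_prime x p" "q_prime x p < 1"
proof -
  have p: "prime p" "real p \<le> x" using assms by (auto simp: PP_def)
  have p0: "real p > 0" using prime_gt_0_nat[OF p(1)] by simp
  hence x0: "x > 0" using p by linarith
  show "0 \<le> q_prime x p" using p x0 by (simp add: q_prime_def)
  show "q_prime x p < 1" using p x0 p0 by (simp add: q_prime_def)
qed

lemma inv_range: assumes "p \<in> PP y" shows "0 \<le> 1 / real p" "1 / real p < 1"
proof -
  have "prime p" using assms by (auto simp: PP_def)
  hence "p \<ge> 2" by (rule prime_ge_2_nat)
  thus "0 \<le> 1 / real p" "1 / real p < 1" by auto
qed

lemma powr_it: "p > 0 \<Longrightarrow> (of_nat p :: complex) powr (\<i> * complex_of_real t) = cis (t * ln (real p))"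
  by (simp add: powr_def cis_conv_exp mult_ac)

lemma powr_1it: "p > 0 \<Longrightarrow> (of_nat p :: complex) powr (- 1 - \<i> * complex_of_real t) = complex_of_real (1 / real p) * cis (t * - ln (real p))"
proof -
  assume p: "p > 0"
  have "(of_nat p :: complex) powr (- 1 - \<i> * complex_of_real t) = exp ((- 1 - \<i> * complex_of_real t) * complex_of_real (ln (real p)))"
    using p by (simp add: powr_def)
  also have "\<dots> = exp (- complex_of_real (ln (real p))) * exp (\<i> * complex_of_real (t * - ln (real p)))"
    by (simp add: exp_add[symmetric] algebra_simps)
  also have "exp (- complex_of_real (ln (real p))) = complex_of_real (1 / real p)"
    using p by (simp add: exp_minus exp_of_real inverse_eq_divide)
  finally show ?thesis by (simp add: cis_conv_exp)
qed

lemma geom_infsum: "norm (z::complex) < 1 \<Longrightarrow> (\<Sum>\<^sub>\<infinity>j::nat. z ^ j) = inverse (1 - z)"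
proof -
  assume z: "norm z < 1"
  have "summable (\<lambda>j. norm (z ^ j))" using z by (simp add: norm_power summable_geometric)
  moreover have "(\<lambda>j. z ^ j) sums (1 / (1 - z))" using geometric_sums[OF z] .
  ultimately have "((\<lambda>j. z ^ j) has_sum (1 / (1 - z))) UNIV" by (rule norm_summable_imp_has_sum)
  thus ?thesis by (simp add: infsumI inverse_eq_divide)
qed

lemma geom_summable: "0 \<le> (r::real) \<Longrightarrow> r < 1 \<Longrightarrow> (\<lambda>j::nat. r ^ j) summable_on UNIV"
  by (rule summable_nonneg_imp_summable_on) (auto intro!: summable_geometric)

lemma prod_summable:
  fixes r :: "'a \<Rightarrow> real"
  assumes fin: "finite A" and r: "\<And>p. p \<in> A \<Longrightarrow> 0 \<le> r p \<and> r p < 1"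
  shows "(\<lambda>e. \<Prod>p\<in>A. r p ^ e p) summable_on PiE A (\<lambda>_. UNIV)"
  by (rule summable_prod_PiE_nonneg[where f="\<lambda>p j. r p ^ j" and B="\<lambda>_. UNIV", OF fin])
     (use r in \<open>auto intro!: geom_summable\<close>)

lemma euler_expand:
  fixes r a :: "'a \<Rightarrow> real"
  assumes fin: "finite A" and r: "\<And>p. p \<in> A \<Longrightarrow> 0 \<le> r p \<and> r p < 1"
  shows "(\<Prod>p\<in>A. inverse (1 - complex_of_real (r p) * cis (t * a p)))
       = (\<Sum>\<^sub>\<infinity>e\<in>PiE A (\<lambda>_. UNIV). complex_of_real (\<Prod>p\<in>A. r p ^ e p) * cis (t * (\<Sum>p\<in>A. real (e p) * a p)))"
proof -
  define f where "f p j = (complex_of_real (r p) * cis (t * a p)) ^ j" for p j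
  have nf: "norm (f p j) = r p ^ j" if "p \<in> A" for p j
    using r[OF that] by (simp add: f_def norm_power norm_mult)
  have abs: "(\<lambda>j. norm (f p j)) summable_on UNIV" if "p \<in> A" for p
    using geom_summable[of "r p"] r[OF that] by (simp add: nf[OF that])
  have "(\<Sum>\<^sub>\<infinity>e\<in>PiE A (\<lambda>_. UNIV). \<Prod>p\<in>A. f p (e p)) = (\<Prod>p\<in>A. \<Sum>\<^sub>\<infinity>j\<in>UNIV. f p j)"
    by (rule infsum_prod_PiE_abs[OF fin]) (use abs in auto)
  also have "\<dots> = (\<Prod>p\<in>A. inverse (1 - complex_of_real (r p) * cis (t * a p)))"
  proof (rule prod.cong)
    fix p assume p: "p \<in> A"
    have "norm (complex_of_real (r p) * cis (t * a p)) < 1" using r[OF p] by (simp add: norm_mult)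
    thus "(\<Sum>\<^sub>\<infinity>j\<in>UNIV. f p j) = inverse (1 - complex_of_real (r p) * cis (t * a p))"
      unfolding f_def by (rule geom_infsum)
  qed simp
  also have "(\<Sum>\<^sub>\<infinity>e\<in>PiE A (\<lambda>_. UNIV). \<Prod>p\<in>A. f p (e p))
      = (\<Sum>\<^sub>\<infinity>e\<in>PiE A (\<lambda>_. UNIV). complex_of_real (\<Prod>p\<in>A. r p ^ e p) * cis (t * (\<Sum>p\<in>A. real (e p) * a p)))"
  proof (rule infsum_cong)
    fix e
    have "(\<Prod>p\<in>A. f p (e p)) = (\<Prod>p\<in>A. complex_of_real (r p ^ e p) * cis (real (e p) * (t * a p)))"
      unfolding f_def by (intro prod.cong) (simp_all add: power_mult_distrib Complex.DeMoivre)
    also have "\<dots> = complex_of_real (\<Prod>p\<in>A. r p ^ e p) * (\<Prod>p\<in>A. cis (real (e p) * (t * a p)))"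
      by (simp add: prod.distrib)
    also have "(\<Prod>p\<in>A. cis (real (e p) * (t * a p))) = cis (t * (\<Sum>p\<in>A. real (e p) * a p))"
      using fin by (simp add: cis_sum_prod sum_distrib_left mult_ac)
    finally show "(\<Prod>p\<in>A. f p (e p)) = complex_of_real (\<Prod>p\<in>A. r p ^ e p) * cis (t * (\<Sum>p\<in>A. real (e p) * a p))" .
  qed
  finally show ?thesis by simp
qed

lemma R_expand: "Rfun x t = (\<Sum>\<^sub>\<infinity>e\<in>VV x. complex_of_real (wt x e) * cis (t * lam x e))"
proof -
  have "Rfun x t = (\<Prod>p\<in>PP x. inverse (1 - complex_of_real (q_prime x p) * cis (t * ln (real p))))"
    unfolding Rfun_def PP_def[symmetric] by (intro prod.cong) (simp_all add: powr_it PP_pos)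
  also have "\<dots> = (\<Sum>\<^sub>\<infinity>e\<in>VV x. complex_of_real (wt x e) * cis (t * lam x e))"
    unfolding VV_def wt_def lam_def by (rule euler_expand[OF finite_PP]) (use q_range in auto)
  finally show ?thesis .
qed

lemma Z_expand: "zeta_trunc y t = (\<Sum>\<^sub>\<infinity>f\<in>VV y. complex_of_real (wz y f) * cis (t * - lam y f))"
proof -
  have "zeta_trunc y t = (\<Prod>p\<in>PP y. inverse (1 - complex_of_real (1 / real p) * cis (t * - ln (real p))))"
    unfolding zeta_trunc_def PP_def[symmetric] by (intro prod.cong) (simp_all add: powr_1it PP_pos)
  also have "\<dots> = (\<Sum>\<^sub>\<infinity>f\<in>VV y. complex_of_real (wz y f) * cis (t * (\<Sum>p\<in>PP y. real (f p) * - ln (real p))))"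
    unfolding VV_def wz_def by (rule euler_expand[OF finite_PP]) (use inv_range in auto)
  also have "\<dots> = (\<Sum>\<^sub>\<infinity>f\<in>VV y. complex_of_real (wz y f) * cis (t * - lam y f))"
    by (simp add: lam_def sum_negf)
  finally show ?thesis .
qed

lemma wt_nonneg: "wt x e \<ge> 0" unfolding wt_def using q_range by (auto intro!: prod_nonneg)
lemma wz_nonneg: "wz y f \<ge> 0" unfolding wz_def by (auto intro!: prod_nonneg)

lemma wt_summable: "wt x summable_on VV x"
  unfolding wt_def[abs_def] VV_def by (rule prod_summable[OF finite_PP]) (use q_range in auto)
lemma wz_summable: "wz y summable_on VV y"
  unfolding wz_def[abs_def] VV_def by (rule prod_summable[OF finite_PP]) (use inv_range in auto)

lemma wt2_summable: "(\<lambda>(e,e'). wt x e * wt x e') summable_on VV x \<times> VV x"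
  by (rule summable_on_times_nonneg) (auto simp: wt_nonneg wt_summable)

lemma wzt_summable: "(\<lambda>(f,j). wz y f * (case j of (e,e') \<Rightarrow> wt x e * wt x e')) summable_on VV y \<times> (VV x \<times> VV x)"
  by (rule summable_on_times_nonneg) (auto simp: wz_nonneg wt_nonneg wz_summable wt2_summable)

lemma Rsq_expand:
  "complex_of_real ((cmod (Rfun x t))^2) = (\<Sum>\<^sub>\<infinity>(e,e')\<in>VV x \<times> VV x. complex_of_real (wt x e * wt x e') * cis (t * (lam x e - lam x e')))"
proof -
  have cR: "cnj (Rfun x t) = (\<Sum>\<^sub>\<infinity>e\<in>VV x. complex_of_real (wt x e) * cis (t * - lam x e))"
    unfolding R_expand infsum_cnj[symmetric] by (intro infsum_cong) (simp add: cis_cnj)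
  have summ: "(\<lambda>(e,e'). complex_of_real (wt x e) * cis (t * lam x e) * (complex_of_real (wt x e') * cis (t * - lam x e'))) summable_on VV x \<times> VV x"
  proof (rule abs_summable_summable)
    show "(\<lambda>z. norm (case z of (e,e') \<Rightarrow> complex_of_real (wt x e) * cis (t * lam x e) * (complex_of_real (wt x e') * cis (t * - lam x e')))) summable_on VV x \<times> VV x"
      using wt2_summable by (rule summable_on_cong[THEN iffD1, rotated]) (auto simp: norm_mult wt_nonneg)
  qed
  have "complex_of_real ((cmod (Rfun x t))^2) = Rfun x t * cnj (Rfun x t)"
    by (rule complex_norm_square)
  also have "\<dots> = (\<Sum>\<^sub>\<infinity>(e,e')\<in>VV x \<times> VV x. complex_of_real (wt x e) * cis (t * lam x e) * (complex_of_real (wt x e') * cis (t * - lam x e')))"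
    unfolding cR by (subst R_expand) (rule infsum_times_Sigma[OF summ, symmetric])
  also have "\<dots> = (\<Sum>\<^sub>\<infinity>(e,e')\<in>VV x \<times> VV x. complex_of_real (wt x e * wt x e') * cis (t * (lam x e - lam x e')))"
    by (intro infsum_cong) (auto simp: cis_mult algebra_simps)
  finally show ?thesis .
qed

lemma ZRsq_expand:
  "zeta_trunc y t * complex_of_real ((cmod (Rfun x t))^2)
   = (\<Sum>\<^sub>\<infinity>(f,j)\<in>VV y \<times> (VV x \<times> VV x). complex_of_real (wz y f * (case j of (e,e') \<Rightarrow> wt x e * wt x e'))
        * cis (t * (case j of (e,e') \<Rightarrow> lam x e - lam x e' - lam y f)))"
proof -
  have summ: "(\<lambda>(f,j). complex_of_real (wz y f) * cis (t * - lam y f) * (case j of (e,e') \<Rightarrow> complex_of_real (wt x e * wt x e') * cis (t * (lam x e - lam x e')))) summable_on VV y \<times> (VV x \<times> VV x)"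
  proof (rule abs_summable_summable)
    show "(\<lambda>z. norm (case z of (f,j) \<Rightarrow> complex_of_real (wz y f) * cis (t * - lam y f) * (case j of (e,e') \<Rightarrow> complex_of_real (wt x e * wt x e') * cis (t * (lam x e - lam x e'))))) summable_on VV y \<times> (VV x \<times> VV x)"
      using wzt_summable by (rule summable_on_cong[THEN iffD1, rotated]) (auto simp: norm_mult wt_nonneg wz_nonneg)
  qed
  have "zeta_trunc y t * complex_of_real ((cmod (Rfun x t))^2)
      = (\<Sum>\<^sub>\<infinity>(f,j)\<in>VV y \<times> (VV x \<times> VV x). complex_of_real (wz y f) * cis (t * - lam y f) * (case j of (e,e') \<Rightarrow> complex_of_real (wt x e * wt x e') * cis (t * (lam x e - lam x e'))))"
    unfolding Rsq_expand Z_expand by (rule infsum_times_Sigma[OF summ, symmetric])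
  also have "\<dots> = (\<Sum>\<^sub>\<infinity>(f,j)\<in>VV y \<times> (VV x \<times> VV x). complex_of_real (wz y f * (case j of (e,e') \<Rightarrow> wt x e * wt x e'))
        * cis (t * (case j of (e,e') \<Rightarrow> lam x e - lam x e' - lam y f)))"
    by (intro infsum_cong) (auto simp: cis_mult algebra_simps)
  finally show ?thesis .
qed

definition cc :: "real \<Rightarrow> (nat \<Rightarrow> nat) \<Rightarrow> real" where "cc x g = (\<Prod>p\<in>PP x. (q_prime x p / real p) ^ g p)"
definition nn :: "real \<Rightarrow> (nat \<Rightarrow> nat) \<Rightarrow> nat" where "nn x g = (\<Prod>p\<in>PP x. p ^ g p)"

lemma cq_range: "p \<in> PP x \<Longrightarrow> 0 \<le> q_prime x p / real p \<and> q_prime x p / real p < 1"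
proof -
  assume p: "p \<in> PP x"
  have "p \<ge> 2" using p by (auto simp: PP_def prime_ge_2_nat)
  hence p1: "real p \<ge> 1" by simp
  have "q_prime x p / real p \<le> q_prime x p / 1"
    by (rule divide_left_mono) (use q_range[OF p] p1 in auto)
  hence b: "q_prime x p / real p \<le> q_prime x p" by (simp only: div_by_1)
  have c: "0 \<le> q_prime x p / real p" by (rule divide_nonneg_nonneg) (use q_range[OF p] in auto)
  show ?thesis using b c q_range[OF p] by linarith
qed

lemma cc_summable: "cc x summable_on VV x"
  unfolding cc_def[abs_def] VV_def by (rule prod_summable[OF finite_PP]) (use cq_range in auto)

lemma cc_nonneg: "cc x g \<ge> 0"
  unfolding cc_def using cq_range by (auto intro!: prod_nonneg)

lemma PP_prime: "p \<in> PP x \<Longrightarrow> prime p" by (simp add: PP_def)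

lemma mult_nn: "prime p \<Longrightarrow> multiplicity p (nn x g) = (if p \<in> PP x then g p else 0)"
  unfolding nn_def by (rule multiplicity_prod_prime_powers[OF finite_PP]) (auto simp: PP_def)

lemma nn_pos: "nn x g > 0"
  unfolding nn_def using PP_pos by (auto intro!: prod_pos)

lemma pf_nn: "prime_factors (nn x g) = {p\<in>PP x. g p > 0}"
  unfolding prime_factors_multiplicity using mult_nn[of _ x g] by (auto simp: PP_prime split: if_splits)

lemma bridge:
  assumes xy: "x \<le> y"
  shows "(\<lambda>k. a_coef y k * q_coef x k) sums (\<Sum>\<^sub>\<infinity>g\<in>VV x. cc x g)"
proof -
  have inj: "inj_on (nn x) (VV x)"
  proof (rule inj_onI)
    fix g1 g2 assume g: "g1 \<in> VV x" "g2 \<in> VV x" "nn x g1 = nn x g2"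
    show "g1 = g2"
    proof
      fix p show "g1 p = g2 p"
      proof (cases "p \<in> PP x")
        case True
        have "g1 p = multiplicity p (nn x g1)" using True by (simp add: mult_nn PP_prime)
        also have "\<dots> = multiplicity p (nn x g2)" by (simp only: g(3))
        also have "\<dots> = g2 p" using True by (simp add: mult_nn PP_prime)
        finally show ?thesis .
      next
        case False
        have "g1 p = undefined" using g(1) False unfolding VV_def by (rule PiE_arb)
        moreover have "g2 p = undefined" using g(2) False unfolding VV_def by (rule PiE_arb)
        ultimately show ?thesis by simp
      qed
    qed
  qed
  have val: "a_coef y (nn x g) * q_coef x (nn x g) = cc x g" if g: "g \<in> VV x" for g
  proof -
    define k where "k = nn x g"
    have k0: "k > 0" unfolding k_def by (rule nn_pos)
    have pf: "prime_factors k = {p\<in>PP x. g p > 0}" unfolding k_def by (rule pf_nn)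
    have a: "a_coef y k = 1 / real k"
    proof -
      have "\<forall>p\<in>prime_factors k. real p \<le> y" using pf xy by (auto simp: PP_def)
      thus ?thesis using k0 by (simp add: a_coef_def)
    qed
    have q: "q_coef x k = (\<Prod>p\<in>PP x. q_prime x p ^ g p)"
    proof -
      have "q_coef x k = (\<Prod>p\<in>prime_factors k. q_prime x p ^ g p)"
        unfolding q_coef_def
      proof (rule prod.cong[OF refl])
        fix p assume "p \<in> prime_factors k"
        hence "p \<in> PP x" using pf by auto
        thus "q_prime x p ^ multiplicity p k = q_prime x p ^ g p" by (simp add: k_def mult_nn PP_prime)
      qed
      also have "\<dots> = (\<Prod>p\<in>PP x. q_prime x p ^ g p)"
        by (rule prod.mono_neutral_left) (auto simp: pf finite_PP)
      finally show ?thesis .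
    qed
    have kk: "1 / real k = (\<Prod>p\<in>PP x. (1 / real p) ^ g p)"
    proof -
      have "(\<Prod>p\<in>PP x. (1 / real p) ^ g p) = (\<Prod>p\<in>PP x. 1 / (real p ^ g p))"
        by (intro prod.cong refl) (simp add: power_divide)
      also have "\<dots> = (\<Prod>p\<in>PP x. 1) / (\<Prod>p\<in>PP x. real p ^ g p)"
        by (rule prod_dividef)
      also have "\<dots> = 1 / real k"
        unfolding k_def nn_def of_nat_prod of_nat_power by simp
      finally show ?thesis by simp
    qed
    have "a_coef y k * q_coef x k = (\<Prod>p\<in>PP x. (1 / real p) ^ g p) * (\<Prod>p\<in>PP x. q_prime x p ^ g p)"
      by (simp add: a q kk)
    also have "\<dots> = (\<Prod>p\<in>PP x. (1 / real p) ^ g p * q_prime x p ^ g p)"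
      by (rule prod.distrib[symmetric])
    also have "\<dots> = cc x g"
      unfolding cc_def by (intro prod.cong refl) (simp add: power_mult_distrib[symmetric])
    finally show ?thesis unfolding k_def .
  qed
  have zero: "a_coef y k * q_coef x k = 0" if k: "k \<notin> nn x ` VV x" for k
  proof (cases "k = 0")
    case True thus ?thesis by (simp add: a_coef_def)
  next
    case False
    show ?thesis
    proof (cases "\<exists>p\<in>prime_factors k. p \<notin> PP x")
      case True
      then obtain p where p: "p \<in> prime_factors k" "p \<notin> PP x" by blast
      have pp: "prime p" "multiplicity p k > 0" using p(1) by (auto simp: prime_factors_multiplicity)
      have "q_prime x p = 0" using p(2) pp(1) by (simp add: PP_def q_prime_def)
      hence "q_prime x p ^ multiplicity p k = 0" using pp(2) by simp
      hence "q_coef x k = 0" unfolding q_coef_def using p(1) by (intro prod_zero) auto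
      thus ?thesis by simp
    next
      case False
      hence sub: "prime_factors k \<subseteq> PP x" by auto
      define g where "g = restrict (\<lambda>p. multiplicity p k) (PP x)"
      have gV: "g \<in> VV x" by (simp add: g_def VV_def)
      have "nn x g = (\<Prod>p\<in>PP x. p ^ multiplicity p k)"
        unfolding nn_def g_def by (intro prod.cong) auto
      also have "\<dots> = (\<Prod>p\<in>prime_factors k. p ^ multiplicity p k)"
        by (rule prod.mono_neutral_right[OF finite_PP sub]) (auto simp: prime_factors_multiplicity PP_prime)
      also have "\<dots> = k" using \<open>k \<noteq> 0\<close> prime_factorization_nat[of k] by simp
      finally have "k \<in> nn x ` VV x" using gV by force
      thus ?thesis using k by simp
    qed
  qed
  have hs: "(cc x has_sum (\<Sum>\<^sub>\<infinity>g\<in>VV x. cc x g)) (VV x)"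
    using cc_summable by (rule has_sum_infsum)
  have "(((\<lambda>k. a_coef y k * q_coef x k) \<circ> nn x) has_sum (\<Sum>\<^sub>\<infinity>g\<in>VV x. cc x g)) (VV x)"
    using hs by (rule has_sum_cong[THEN iffD1, rotated]) (simp add: val)
  hence "((\<lambda>k. a_coef y k * q_coef x k) has_sum (\<Sum>\<^sub>\<infinity>g\<in>VV x. cc x g)) (nn x ` VV x)"
    using has_sum_reindex[OF inj] by blast
  hence "((\<lambda>k. a_coef y k * q_coef x k) has_sum (\<Sum>\<^sub>\<infinity>g\<in>VV x. cc x g)) UNIV"
    by (rule has_sum_cong_neutral[THEN iffD1, rotated -1]) (auto simp: zero)
  thus ?thesis by (rule has_sum_imp_sums)
qed

lemma Th_real:
  assumes s: "s > 0"
  shows "Th s \<theta> = complex_of_real (Re (Th s \<theta>))" "Re (Th s \<theta>) \<ge> 0"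
    "Re (Th s \<theta>) \<le> (\<Sum>\<^sub>\<infinity>l::int. Phi (of_int l / s))"
proof -
  obtain r where r: "r \<ge> 0" "Th s \<theta> = complex_of_real r"
    using theta_nonneg[OF s, of \<theta>] unfolding Th_def by blast
  show "Th s \<theta> = complex_of_real (Re (Th s \<theta>))" "Re (Th s \<theta>) \<ge> 0" using r by simp_all
  have "Re (Th s \<theta>) \<le> norm (Th s \<theta>)" by (rule complex_Re_le_cmod)
  also have "\<dots> \<le> (\<Sum>\<^sub>\<infinity>l::int. Phi (of_int l / s))" by (rule Th_bound[OF s])
  finally show "Re (Th s \<theta>) \<le> (\<Sum>\<^sub>\<infinity>l::int. Phi (of_int l / s))" .
qed

lemma Th_zero: assumes s: "s > 0" shows "Re (Th s 0) \<ge> sqrt (2 * pi) * s"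
proof -
  have "Th s 0 = (\<Sum>\<^sub>\<infinity>l::int. complex_of_real (Phi (of_int l / s)))" by (simp add: Th_def)
  also have "\<dots> = complex_of_real (\<Sum>\<^sub>\<infinity>l::int. Phi (of_int l / s))"
    by (rule infsumI, rule has_sum_of_real, rule has_sum_infsum, rule summable_Phi[OF s])
  finally show ?thesis using theta_zero[OF s] by simp
qed

lemma infsum_of_real_summable:
  "h summable_on A \<Longrightarrow> (\<Sum>\<^sub>\<infinity>j\<in>A. complex_of_real (h j)) = complex_of_real (infsum h A)"
  by (rule infsumI, rule has_sum_of_real, rule has_sum_infsum)

lemma apply_functional:
  fixes c lm :: "'j \<Rightarrow> real" and F :: "real \<Rightarrow> complex"
  assumes s: "s > 0" and cnn: "\<And>j. j \<in> J \<Longrightarrow> c j \<ge> 0" and cs: "c summable_on J"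
    and E: "\<And>t. F t = (\<Sum>\<^sub>\<infinity>j\<in>J. complex_of_real (c j) * cis (t * lm j))"
  shows "(\<lambda>l::int. F (\<alpha> * of_int l) * complex_of_real (Phi (of_int l / s))) summable_on UNIV"
    and "(\<lambda>j. c j * Re (Th s (\<alpha> * lm j))) summable_on J"
    and "(\<Sum>\<^sub>\<infinity>l::int. F (\<alpha> * of_int l) * complex_of_real (Phi (of_int l / s)))
          = complex_of_real (\<Sum>\<^sub>\<infinity>j\<in>J. c j * Re (Th s (\<alpha> * lm j)))"
proof -
  note fu = functional[where \<alpha>=\<alpha> and lam=lm, OF s cnn cs]
  show "(\<lambda>l::int. F (\<alpha> * of_int l) * complex_of_real (Phi (of_int l / s))) summable_on UNIV"
    using fu(1) by (simp add: E)
  let ?K = "\<Sum>\<^sub>\<infinity>l::int. Phi (of_int l / s)"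
  show sm: "(\<lambda>j. c j * Re (Th s (\<alpha> * lm j))) summable_on J"
  proof (rule summable_on_comparison_test)
    show "(\<lambda>j. c j * ?K) summable_on J" by (rule summable_on_cmult_left[OF cs])
    fix j assume j: "j \<in> J"
    show "c j * Re (Th s (\<alpha> * lm j)) \<le> c j * ?K"
      using Th_real(3)[OF s] cnn[OF j] by (intro mult_left_mono) auto
    show "0 \<le> c j * Re (Th s (\<alpha> * lm j))" using Th_real(2)[OF s] cnn[OF j] by simp
  qed
  have "(\<Sum>\<^sub>\<infinity>l::int. F (\<alpha> * of_int l) * complex_of_real (Phi (of_int l / s)))
      = (\<Sum>\<^sub>\<infinity>j\<in>J. complex_of_real (c j) * Th s (\<alpha> * lm j))"
    using fu(2) by (simp add: E)
  also have "\<dots> = (\<Sum>\<^sub>\<infinity>j\<in>J. complex_of_real (c j * Re (Th s (\<alpha> * lm j))))"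
    by (intro infsum_cong) (subst Th_real(1)[OF s], simp)
  also have "\<dots> = complex_of_real (\<Sum>\<^sub>\<infinity>j\<in>J. c j * Re (Th s (\<alpha> * lm j)))"
    by (rule infsum_of_real_summable[OF sm])
  finally show "(\<Sum>\<^sub>\<infinity>l::int. F (\<alpha> * of_int l) * complex_of_real (Phi (of_int l / s)))
          = complex_of_real (\<Sum>\<^sub>\<infinity>j\<in>J. c j * Re (Th s (\<alpha> * lm j)))" .
qed

definition extv :: "real \<Rightarrow> real \<Rightarrow> (nat \<Rightarrow> nat) \<Rightarrow> nat \<Rightarrow> nat" where
  "extv x y g = (\<lambda>p. if p \<in> PP y then (if p \<in> PP x then g p else 0) else undefined)"
definition addv :: "real \<Rightarrow> (nat \<Rightarrow> nat) \<Rightarrow> (nat \<Rightarrow> nat) \<Rightarrow> nat \<Rightarrow> nat" where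
  "addv x g e = (\<lambda>p. if p \<in> PP x then g p + e p else undefined)"

lemma PP_mono: "x \<le> y \<Longrightarrow> PP x \<subseteq> PP y" by (auto simp: PP_def)

lemma extv_VV: "extv x y g \<in> VV y" by (auto simp: extv_def VV_def)
lemma addv_VV: "addv x g e \<in> VV x" by (auto simp: addv_def VV_def)

lemma wz_ext: assumes "x \<le> y" shows "wz y (extv x y g) = (\<Prod>p\<in>PP x. (1 / real p) ^ g p)"
proof -
  have "wz y (extv x y g) = (\<Prod>p\<in>PP x. (1 / real p) ^ extv x y g p)"
    unfolding wz_def by (rule prod.mono_neutral_right[OF finite_PP PP_mono[OF assms]]) (auto simp: extv_def)
  also have "\<dots> = (\<Prod>p\<in>PP x. (1 / real p) ^ g p)"
    using PP_mono[OF assms] by (intro prod.cong refl) (auto simp: extv_def)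
  finally show ?thesis .
qed

lemma lam_ext: assumes "x \<le> y" shows "lam y (extv x y g) = lam x g"
proof -
  have "lam y (extv x y g) = (\<Sum>p\<in>PP x. real (extv x y g p) * ln (real p))"
    unfolding lam_def by (rule sum.mono_neutral_right[OF finite_PP PP_mono[OF assms]]) (auto simp: extv_def)
  also have "\<dots> = lam x g"
    unfolding lam_def using PP_mono[OF assms] by (intro sum.cong refl) (auto simp: extv_def)
  finally show ?thesis .
qed

lemma wt_addv: "wt x (addv x g e) = wt x g * wt x e"
  unfolding wt_def prod.distrib[symmetric] by (intro prod.cong refl) (simp add: addv_def power_add)

lemma lam_addv: "lam x (addv x g e) = lam x g + lam x e"
  unfolding lam_def sum.distrib[symmetric] by (intro sum.cong refl) (simp add: addv_def algebra_simps)

lemma cc_split: "cc x g = (\<Prod>p\<in>PP x. (1 / real p) ^ g p) * wt x g"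
  unfolding cc_def wt_def prod.distrib[symmetric] by (intro prod.cong refl) (simp add: power_mult_distrib[symmetric])

theorem mainTheorem6:
  fixes \<alpha> N y :: real
  assumes "\<alpha> > 0" and "N \<ge> 3" and "y \<ge> xpar N"
  defines "x \<equiv> xpar N"
  shows "(\<lambda>l::int. (cmod (Rfun x (\<alpha> * of_int l)))\<^sup>2 * Phi (of_int l / N)) summable_on UNIV
    \<and> (\<Sum>\<^sub>\<infinity>l::int. (cmod (Rfun x (\<alpha> * of_int l)))\<^sup>2 * Phi (of_int l / N)) \<ge> sqrt (2 * pi) * N
    \<and> summable (\<lambda>k. a_coef y k * q_coef x k)
    \<and> (\<lambda>l::int. zeta_trunc y (\<alpha> * of_int l) * complex_of_real ((cmod (Rfun x (\<alpha> * of_int l)))\<^sup>2 * Phi (of_int l / N))) summable_on UNIV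
    \<and> (\<Sum>\<^sub>\<infinity>l::int. zeta_trunc y (\<alpha> * of_int l) * complex_of_real ((cmod (Rfun x (\<alpha> * of_int l)))\<^sup>2 * Phi (of_int l / N))) \<in> \<real>
    \<and> Re (\<Sum>\<^sub>\<infinity>l::int. zeta_trunc y (\<alpha> * of_int l) * complex_of_real ((cmod (Rfun x (\<alpha> * of_int l)))\<^sup>2 * Phi (of_int l / N))) \<ge> 0
    \<and> Re (\<Sum>\<^sub>\<infinity>l::int. zeta_trunc y (\<alpha> * of_int l) * complex_of_real ((cmod (Rfun x (\<alpha> * of_int l)))\<^sup>2 * Phi (of_int l / N)))
        \<ge> (\<Sum>k. a_coef y k * q_coef x k) * (\<Sum>\<^sub>\<infinity>l::int. (cmod (Rfun x (\<alpha> * of_int l)))\<^sup>2 * Phi (of_int l / N))"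
proof -
  have s: "N > 0" using assms(2) by simp
  have xy: "x \<le> y" using assms(3) by (simp add: x_def)
  define J1 where "J1 = VV x \<times> VV x"
  define c1 where "c1 j = (case j of (e, e') \<Rightarrow> wt x e * wt x e')" for j
  define l1 where "l1 j = (case j of (e, e') \<Rightarrow> lam x e - lam x e')" for j
  have c1nn: "j \<in> J1 \<Longrightarrow> c1 j \<ge> 0" for j by (auto simp: c1_def wt_nonneg split: prod.splits)
  have c1s: "c1 summable_on J1" using wt2_summable by (simp add: c1_def[abs_def] J1_def)
  define F1 where "F1 t = complex_of_real ((cmod (Rfun x t))^2)" for t
  have E1: "F1 t = (\<Sum>\<^sub>\<infinity>j\<in>J1. complex_of_real (c1 j) * cis (t * l1 j))" for t
    unfolding F1_def Rsq_expand J1_def by (intro infsum_cong) (simp add: c1_def l1_def case_prod_beta)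
  note A1 = apply_functional[where \<alpha>=\<alpha> and s=N and F=F1 and lm=l1, OF s c1nn c1s E1]
  define S1 where "S1 = (\<Sum>\<^sub>\<infinity>l::int. (cmod (Rfun x (\<alpha> * of_int l)))\<^sup>2 * Phi (of_int l / N))"
  define B1 where "B1 = (\<Sum>\<^sub>\<infinity>j\<in>J1. c1 j * Re (Th N (\<alpha> * l1 j)))"
  have T1: "F1 (\<alpha> * of_int l) * complex_of_real (Phi (of_int l / N))
      = complex_of_real ((cmod (Rfun x (\<alpha> * of_int l)))\<^sup>2 * Phi (of_int l / N))" for l :: int
    by (simp add: F1_def)
  have sum1: "(\<lambda>l::int. (cmod (Rfun x (\<alpha> * of_int l)))\<^sup>2 * Phi (of_int l / N)) summable_on UNIV"
    using summable_on_Re[OF A1(1)] by (simp only: T1 Re_complex_of_real)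
  have "complex_of_real S1 = (\<Sum>\<^sub>\<infinity>l::int. complex_of_real ((cmod (Rfun x (\<alpha> * of_int l)))\<^sup>2 * Phi (of_int l / N)))"
    unfolding S1_def by (rule infsum_of_real_summable[OF sum1, symmetric])
  also have "\<dots> = complex_of_real B1" using A1(3) unfolding B1_def by (simp only: T1)
  finally have S1B1: "S1 = B1" by simp
  define e0 where "e0 = restrict (\<lambda>_. 0::nat) (PP x)"
  have e0V: "e0 \<in> VV x" by (simp add: e0_def VV_def)
  have we0: "wt x e0 = 1" by (simp add: wt_def e0_def)
  have le0: "lam x e0 = 0" by (simp add: lam_def e0_def)
  have "c1 (e0, e0) * Re (Th N (\<alpha> * l1 (e0, e0))) \<le> B1"
  proof -
    have "(\<Sum>j\<in>{(e0,e0)}. c1 j * Re (Th N (\<alpha> * l1 j))) \<le> B1"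
      unfolding B1_def by (rule finite_sum_le_infsum[OF A1(2)])
        (use e0V Th_real(2)[OF s] c1nn in \<open>auto simp: J1_def\<close>)
    thus ?thesis by simp
  qed
  hence "Re (Th N 0) \<le> B1" by (simp add: c1_def l1_def we0 le0)
  hence first2: "S1 \<ge> sqrt (2 * pi) * N" using Th_zero[OF s] S1B1 by linarith
  have br: "(\<lambda>k. a_coef y k * q_coef x k) sums (\<Sum>\<^sub>\<infinity>g\<in>VV x. cc x g)" by (rule bridge[OF xy])
  define CC where "CC = (\<Sum>\<^sub>\<infinity>g\<in>VV x. cc x g)"
  have suminf_eq: "(\<Sum>k. a_coef y k * q_coef x k) = CC" using br unfolding CC_def by (rule sums_unique[symmetric])
  define J2 where "J2 = VV y \<times> J1"
  define c2 where "c2 j = (case j of (f, j1) \<Rightarrow> wz y f * c1 j1)" for j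
  define l2 where "l2 j = (case j of (f, j1) \<Rightarrow> l1 j1 - lam y f)" for j
  have c2nn: "j \<in> J2 \<Longrightarrow> c2 j \<ge> 0" for j
    by (auto simp: c2_def c1_def wt_nonneg wz_nonneg split: prod.splits)
  have c2s: "c2 summable_on J2" using wzt_summable by (simp add: c2_def[abs_def] c1_def[abs_def] J2_def J1_def)
  define F2 where "F2 t = zeta_trunc y t * complex_of_real ((cmod (Rfun x t))^2)" for t
  have E2: "F2 t = (\<Sum>\<^sub>\<infinity>j\<in>J2. complex_of_real (c2 j) * cis (t * l2 j))" for t
    unfolding F2_def ZRsq_expand J2_def J1_def
    by (intro infsum_cong) (auto simp: c2_def c1_def l2_def l1_def split: prod.splits)
  note A2 = apply_functional[where \<alpha>=\<alpha> and s=N and F=F2 and lm=l2, OF s c2nn c2s E2]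
  have T2: "zeta_trunc y (\<alpha> * of_int l) * complex_of_real ((cmod (Rfun x (\<alpha> * of_int l)))\<^sup>2 * Phi (of_int l / N))
      = F2 (\<alpha> * of_int l) * complex_of_real (Phi (of_int l / N))" for l :: int
    by (simp add: F2_def mult.assoc)
  define B2 where "B2 = (\<Sum>\<^sub>\<infinity>j\<in>J2. c2 j * Re (Th N (\<alpha> * l2 j)))"
  have sum2: "(\<lambda>l::int. zeta_trunc y (\<alpha> * of_int l) * complex_of_real ((cmod (Rfun x (\<alpha> * of_int l)))\<^sup>2 * Phi (of_int l / N))) summable_on UNIV"
    using A2(1) by (simp only: T2)
  have L2: "(\<Sum>\<^sub>\<infinity>l::int. zeta_trunc y (\<alpha> * of_int l) * complex_of_real ((cmod (Rfun x (\<alpha> * of_int l)))\<^sup>2 * Phi (of_int l / N)))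
      = complex_of_real B2"
    using A2(3) unfolding B2_def by (simp only: T2)
  have B2nn: "B2 \<ge> 0" unfolding B2_def
    using c2nn Th_real(2)[OF s] by (intro infsum_nonneg) auto
  define G1 where "G1 j = c1 j * Re (Th N (\<alpha> * l1 j))" for j
  define G2 where "G2 j = c2 j * Re (Th N (\<alpha> * l2 j))" for j
  define iota where "iota = (\<lambda>(g::nat\<Rightarrow>nat, j1::(nat\<Rightarrow>nat)\<times>(nat\<Rightarrow>nat)). (extv x y g, (addv x g (fst j1), snd j1)))"
  have PPsub: "PP x \<subseteq> PP y" by (rule PP_mono[OF xy])
  have inj: "inj_on iota (VV x \<times> J1)"
  proof (rule inj_onI)
    fix a b assume a: "a \<in> VV x \<times> J1" and b: "b \<in> VV x \<times> J1" and eq: "iota a = iota b"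
    obtain g e e' where ga: "a = (g, (e, e'))" by (cases a) auto
    obtain h d d' where gb: "b = (h, (d, d'))" by (cases b) auto
    have mem: "g \<in> VV x" "e \<in> VV x" "e' \<in> VV x" "h \<in> VV x" "d \<in> VV x" "d' \<in> VV x"
      using a b ga gb by (auto simp: J1_def)
    have eq1: "extv x y g = extv x y h" and eq2: "addv x g e = addv x h d" and eq3: "e' = d'"
      using eq ga gb by (auto simp: iota_def)
    have gh: "g = h"
    proof
      fix p show "g p = h p"
      proof (cases "p \<in> PP x")
        case True
        hence "p \<in> PP y" using PPsub by auto
        thus ?thesis using True fun_cong[OF eq1, of p] by (simp add: extv_def)
      next
        case False
        have "g p = undefined" using mem(1) False unfolding VV_def by (rule PiE_arb)
        moreover have "h p = undefined" using mem(4) False unfolding VV_def by (rule PiE_arb)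
        ultimately show ?thesis by simp
      qed
    qed
    have ed: "e = d"
    proof
      fix p show "e p = d p"
      proof (cases "p \<in> PP x")
        case True
        thus ?thesis using fun_cong[OF eq2, of p] gh by (simp add: addv_def)
      next
        case False
        have "e p = undefined" using mem(2) False unfolding VV_def by (rule PiE_arb)
        moreover have "d p = undefined" using mem(5) False unfolding VV_def by (rule PiE_arb)
        ultimately show ?thesis by simp
      qed
    qed
    show "a = b" using ga gb gh ed eq3 by simp
  qed
  have img: "iota ` (VV x \<times> J1) \<subseteq> J2"
    by (auto simp: iota_def J2_def J1_def extv_VV addv_VV)
  have val: "G2 (iota z) = cc x (fst z) * G1 (snd z)" if z: "z \<in> VV x \<times> J1" for z
  proof -
    obtain g e e' where zz: "z = (g, (e, e'))" by (cases z) auto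
    have c: "c2 (iota z) = cc x g * c1 (e, e')"
      by (simp add: zz iota_def c2_def c1_def wz_ext[OF xy] wt_addv cc_split)
    have l: "l2 (iota z) = l1 (e, e')"
      by (simp add: zz iota_def l2_def l1_def lam_ext[OF xy] lam_addv)
    show ?thesis unfolding G2_def G1_def c l by (simp add: zz)
  qed
  have G1s: "G1 summable_on J1" using A1(2) by (simp add: G1_def[abs_def])
  have G2s: "G2 summable_on J2" using A2(2) by (simp add: G2_def[abs_def])
  have G1nn: "j \<in> J1 \<Longrightarrow> G1 j \<ge> 0" for j using c1nn Th_real(2)[OF s] by (simp add: G1_def)
  have G2nn: "j \<in> J2 \<Longrightarrow> G2 j \<ge> 0" for j using c2nn Th_real(2)[OF s] by (simp add: G2_def)
  have prodsum: "(\<lambda>(g, j1). cc x g * G1 j1) summable_on VV x \<times> J1"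
    by (rule summable_on_times_nonneg) (use cc_nonneg G1nn cc_summable G1s in auto)
  have "CC * B1 = (\<Sum>\<^sub>\<infinity>(g, j1)\<in>VV x \<times> J1. cc x g * G1 j1)"
    unfolding CC_def B1_def G1_def[symmetric] by (rule infsum_times_Sigma[OF prodsum, symmetric])
  also have "\<dots> = (\<Sum>\<^sub>\<infinity>z\<in>VV x \<times> J1. (G2 \<circ> iota) z)"
    by (intro infsum_cong) (auto simp: val)
  also have "\<dots> = (\<Sum>\<^sub>\<infinity>z\<in>iota ` (VV x \<times> J1). G2 z)"
    by (rule infsum_reindex[OF inj, symmetric])
  also have "\<dots> \<le> (\<Sum>\<^sub>\<infinity>z\<in>J2. G2 z)"
    by (rule infsum_mono2[OF summable_on_subset_banach[OF G2s img] G2s img]) (use G2nn in auto)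
  also have "\<dots> = B2" by (simp add: B2_def G2_def)
  finally have key: "CC * B1 \<le> B2" .
  show ?thesis
  proof (intro conjI)
    show "(\<lambda>l::int. (cmod (Rfun x (\<alpha> * of_int l)))\<^sup>2 * Phi (of_int l / N)) summable_on UNIV" by (rule sum1)
    show "(\<Sum>\<^sub>\<infinity>l::int. (cmod (Rfun x (\<alpha> * of_int l)))\<^sup>2 * Phi (of_int l / N)) \<ge> sqrt (2 * pi) * N"
      using first2 by (simp add: S1_def)
    show "summable (\<lambda>k. a_coef y k * q_coef x k)" using br by (rule sums_summable)
    show "(\<lambda>l::int. zeta_trunc y (\<alpha> * of_int l) * complex_of_real ((cmod (Rfun x (\<alpha> * of_int l)))\<^sup>2 * Phi (of_int l / N))) summable_on UNIV"
      by (rule sum2)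
    show "(\<Sum>\<^sub>\<infinity>l::int. zeta_trunc y (\<alpha> * of_int l) * complex_of_real ((cmod (Rfun x (\<alpha> * of_int l)))\<^sup>2 * Phi (of_int l / N))) \<in> \<real>"
      unfolding L2 by simp
    show "Re (\<Sum>\<^sub>\<infinity>l::int. zeta_trunc y (\<alpha> * of_int l) * complex_of_real ((cmod (Rfun x (\<alpha> * of_int l)))\<^sup>2 * Phi (of_int l / N))) \<ge> 0"
      unfolding L2 using B2nn by simp
    show "Re (\<Sum>\<^sub>\<infinity>l::int. zeta_trunc y (\<alpha> * of_int l) * complex_of_real ((cmod (Rfun x (\<alpha> * of_int l)))\<^sup>2 * Phi (of_int l / N)))
        \<ge> (\<Sum>k. a_coef y k * q_coef x k) * (\<Sum>\<^sub>\<infinity>l::int. (cmod (Rfun x (\<alpha> * of_int l)))\<^sup>2 * Phi (of_int l / N))"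
      unfolding L2 suminf_eq S1_def[symmetric] S1B1 using key by simp
  qed
qed

end
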